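(* Fix $q\in[0,1]$, $p\in(0,1)\setminus\{1/2\}$, an integer $k\geq1$ and $f:[0,1]\to[0,1]$, and let $\{S_n\}$ be the elephant random walk with $k$ extractions with replacement described in the context. Suppose one of the following holds: (C1) $p>1/2$, $f(1)<p/(2p-1)$, and $f(i/k)\leq f((i-1)/k)$ for each $i\in\{1,\dots,k\}$, with strict inequality for at least one $i$; (C2) $p<1/2$, $f(0)<(1-p)/(1-2p)$, and $f(i/k)\geq f((i-1)/k)$ for each $i\in\{1,\dots,k\}$, with strict inequality for at least one $i$. Then $S_n/n$ converges almost surely to some $x^*\in(-1,1)$.
   Context: The model: set $X_0=S_0=0$ and let $X_1\in\{\pm1\}$ with $P(X_1=1)=q$. Let $\mathcal{F}_n$ be the $\sigma$-field of all information of the process up to time $n$. For each $n\geq1$, draw $U_{n,1},\dots,U_{n,k}$ i.i.d. uniform on $\{1,\dots,n\}$ (independently of the past), set $C_n^+=\sum_{i=1}^k\chi\{X_{U_{n,i}}=1\}$, and, conditionally on $\mathcal{F}_n$ and the $U_{n,i}$, let $X_{n+1}=1$ with probability $pf(C_n^+/k)+(1-p)\{1-f(C_n^+/k)\}$ and $X_{n+1}=-1$ otherwise. Set $S_n=\sum_{i=1}^n X_i$. The sample size $k$ does not depend on $n$. *)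

theory Defs
  imports "HOL-Probability.Probability"
begin

text \<open>Indices of the independent driving noise of the elephant random walk:
  the first step, the samples U_{n,i}, and the auxiliary uniform coins V_n.\<close>
datatype erw_idx = First | Samp nat nat | Coin nat

definition erw_index_set :: "nat \<Rightarrow> erw_idx set" where
  "erw_index_set k = {First} \<union> {Samp n i | n i. 1 \<le> n \<and> i \<in> {1..k}} \<union> {Coin n | n. 1 \<le> n}"

definition erw_noise ::
  "('a \<Rightarrow> int) \<Rightarrow> (nat \<Rightarrow> nat \<Rightarrow> 'a \<Rightarrow> nat) \<Rightarrow> (nat \<Rightarrow> 'a \<Rightarrow> real) \<Rightarrow> erw_idx \<Rightarrow> 'a \<Rightarrow> real" where
  "erw_noise X1 U V j = (case j of
      First \<Rightarrow> (\<lambda>\<omega>. real_of_int (X1 \<omega>))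
    | Samp n i \<Rightarrow> (\<lambda>\<omega>. real (U n i \<omega>))
    | Coin n \<Rightarrow> V n)"

definition erw_count :: "nat \<Rightarrow> (nat \<Rightarrow> 'a \<Rightarrow> int) \<Rightarrow> (nat \<Rightarrow> nat \<Rightarrow> 'a \<Rightarrow> nat) \<Rightarrow> nat \<Rightarrow> 'a \<Rightarrow> nat" where
  "erw_count k X U n \<omega> = card {i \<in> {1..k}. X (U n i \<omega>) \<omega> = 1}"

definition erw_S :: "(nat \<Rightarrow> 'a \<Rightarrow> int) \<Rightarrow> nat \<Rightarrow> 'a \<Rightarrow> int" where
  "erw_S X n \<omega> = (\<Sum>i\<in>{1..n}. X i \<omega>)"

end

theory Submission
  imports Defs
begin


fun bern :: "nat \<Rightarrow> (nat \<Rightarrow> real) \<Rightarrow> real \<Rightarrow> real" where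
  "bern 0 F y = F 0"
| "bern (Suc m) F y = y * bern m (\<lambda>j. F (Suc j)) y + (1 - y) * bern m F y"

lemma bern_0: "bern m F 0 = F 0"
  by (induction m arbitrary: F) auto

lemma bern_1: "bern m F 1 = F m"
  by (induction m arbitrary: F) auto

lemma bern_cont: "continuous_on A (bern m F)"
  by (induction m arbitrary: F) (auto intro!: continuous_intros)

lemma bern_range:
  assumes "\<And>j. F j \<in> {0..1}" "y \<in> {0..1}"
  shows "bern m F y \<in> {0..1}"
  using assms
proof (induction m arbitrary: F)
  case 0 then show ?case by auto
next
  case (Suc m)
  have a: "bern m (\<lambda>j. F (Suc j)) y \<in> {0..1}" "bern m F y \<in> {0..1}"
    using Suc by auto
  show ?case using a Suc.prems(2)
    by (auto simp: convex_bound_le intro!: add_nonneg_nonneg mult_nonneg_nonneg)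
qed

lemma bern_mono_F:
  assumes "\<And>j. F j \<le> G j" "y \<in> {0..1}"
  shows "bern m F y \<le> bern m G y"
  using assms
proof (induction m arbitrary: F G)
  case 0 then show ?case by auto
next
  case (Suc m)
  have "bern m (\<lambda>j. F (Suc j)) y \<le> bern m (\<lambda>j. G (Suc j)) y" "bern m F y \<le> bern m G y"
    using Suc by auto
  then show ?case using Suc.prems(2)
    by (auto intro!: add_mono mult_left_mono)
qed

lemma bern_antimono:
  assumes "\<And>j. F (Suc j) \<le> F j" "x \<in> {0..1}" "y \<in> {0..1}" "x \<le> y"
  shows "bern m F y \<le> bern m F x"
  using assms
proof (induction m arbitrary: F)
  case 0 then show ?case by auto
next
  case (Suc m)
  define F' where "F' = (\<lambda>j. F (Suc j))"
  have i1: "bern m F' y \<le> bern m F' x" using Suc unfolding F'_def by auto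
  have i2: "bern m F y \<le> bern m F x" using Suc by auto
  have d: "bern m F' x \<le> bern m F x" unfolding F'_def
    by (rule bern_mono_F) (use Suc in auto)
  have "bern (Suc m) F y = y * bern m F' y + (1 - y) * bern m F y" by (simp add: F'_def)
  also have "\<dots> \<le> y * bern m F' x + (1 - y) * bern m F x"
    using i1 i2 Suc.prems by (auto intro!: add_mono mult_left_mono)
  also have "\<dots> = bern m F x + y * (bern m F' x - bern m F x)" by algebra
  also have "\<dots> \<le> bern m F x + x * (bern m F' x - bern m F x)"
    using d Suc.prems by (auto intro!: mult_right_mono_neg)
  also have "\<dots> = bern (Suc m) F x" by (simp add: F'_def algebra_simps)
  finally show ?case .
qed

lemma card_upd_count:
  assumes "x \<notin> I" "finite I"
  shows "card {i \<in> insert x I. (g(x := y)) i \<in> A} = (if y \<in> A then 1 else 0) + card {i \<in> I. g i \<in> A}"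
proof -
  have e: "{i \<in> I. (g(x := y)) i \<in> A} = {i \<in> I. g i \<in> A}" using assms by auto
  show ?thesis
  proof (cases "y \<in> A")
    case True
    then have "{i \<in> insert x I. (g(x := y)) i \<in> A} = insert x {i \<in> I. g i \<in> A}" using assms by auto
    then show ?thesis using True assms by simp
  next
    case False
    then have "{i \<in> insert x I. (g(x := y)) i \<in> A} = {i \<in> I. g i \<in> A}" using assms by auto
    then show ?thesis using False by simp
  qed
qed

lemma comb_bern:
  assumes "finite I" "finite N" "A \<subseteq> N" "card N > 0"
  shows "(\<Sum>u\<in>PiE I (\<lambda>_. N). F (card {i\<in>I. u i \<in> A}))
         = real (card N) ^ card I * bern (card I) F (real (card A) / real (card N))"
  using assms(1)
proof (induction I arbitrary: F rule: finite_induct)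
  case empty
  then show ?case by simp
next
  case (insert x I)
  let ?n = "real (card N)" and ?a = "real (card A)"
  have fA: "finite A" using assms finite_subset by blast
  have "(\<Sum>u\<in>PiE (insert x I) (\<lambda>_. N). F (card {i\<in>insert x I. u i \<in> A}))
      = (\<Sum>(y,g)\<in>N \<times> PiE I (\<lambda>_. N). F (card {i\<in>insert x I. (g(x := y)) i \<in> A}))"
    unfolding PiE_insert_eq
    by (subst sum.reindex) (auto intro!: inj_combinator insert.hyps simp: case_prod_beta)
  also have "\<dots> = (\<Sum>(y,g)\<in>N \<times> PiE I (\<lambda>_. N). F ((if y \<in> A then 1 else 0) + card {i\<in>I. g i \<in> A}))"
  proof (intro sum.cong refl)
    fix z assume "z \<in> N \<times> PiE I (\<lambda>_. N)"
    show "(case z of (y,g) \<Rightarrow> F (card {i\<in>insert x I. (g(x := y)) i \<in> A}))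
        = (case z of (y,g) \<Rightarrow> F ((if y \<in> A then 1 else 0) + card {i\<in>I. g i \<in> A}))"
      by (cases z) (simp only: prod.case card_upd_count[OF insert.hyps(2,1)])
  qed
  also have "\<dots> = (\<Sum>y\<in>N. \<Sum>g\<in>PiE I (\<lambda>_. N). F ((if y \<in> A then 1 else 0) + card {i\<in>I. g i \<in> A}))"
    by (rule sum.cartesian_product[symmetric])
  also have "\<dots> = (\<Sum>y\<in>N. if y \<in> A then (\<Sum>g\<in>PiE I (\<lambda>_. N). F (Suc (card {i\<in>I. g i \<in> A})))
                        else (\<Sum>g\<in>PiE I (\<lambda>_. N). F (card {i\<in>I. g i \<in> A})))"
    by (intro sum.cong refl) auto
  also have "\<dots> = ?a * (\<Sum>g\<in>PiE I (\<lambda>_. N). F (Suc (card {i\<in>I. g i \<in> A})))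
                + real (card (N - A)) * (\<Sum>g\<in>PiE I (\<lambda>_. N). F (card {i\<in>I. g i \<in> A}))"
    using assms fA by (simp add: sum.If_cases Int_absorb1 Diff_eq[symmetric])
  also have "\<dots> = ?a * (?n ^ card I * bern (card I) (\<lambda>j. F (Suc j)) (?a / ?n))
                + (?n - ?a) * (?n ^ card I * bern (card I) F (?a / ?n))"
    using insert.IH[of "\<lambda>j. F (Suc j)"] insert.IH[of F] assms fA
    by (simp add: card_Diff_subset card_mono of_nat_diff)
  also have "\<dots> = ?n ^ card (insert x I) * bern (card (insert x I)) F (?a / ?n)"
    using insert.hyps assms by (cases "N = {}") (simp_all add: field_simps)
  finally show ?case .
qed

lemma det_upper:
  fixes y r :: "nat \<Rightarrow> real" and H :: "real \<Rightarrow> real"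
  assumes y01: "\<forall>n\<ge>1. y n \<in> {0..1}"
    and Hmono: "\<forall>a\<in>{0..1}. \<forall>b\<in>{0..1}. a \<le> b \<longrightarrow> H b \<le> H a"
    and H01: "\<forall>a\<in>{0..1}. H a \<in> {0..1}"
    and ys: "ys \<in> {0..1}" "H ys = ys"
    and r: "r \<longlonglongrightarrow> 0"
    and rec: "\<forall>N\<ge>1. y (Suc N) = (\<Sum>m=1..N. H (y m)) / (real N + 1) + r N"
    and e: "\<epsilon> > 0"
  shows "eventually (\<lambda>n. y n < ys + 2 * \<epsilon>) sequentially"
proof -
  define W where "W N = (\<Sum>m=1..N. H (y m))" for N
  define w where "w N = W N / (real N + 1)" for N
  have W0: "0 \<le> W N" for N unfolding W_def using H01 y01 by (auto intro!: sum_nonneg)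
  have W1: "W N \<le> real N" for N
  proof -
    have "W N \<le> (\<Sum>m=1..N. 1)" unfolding W_def using H01 y01 by (intro sum_mono) auto
    then show ?thesis by simp
  qed
  have w0: "0 \<le> w N" for N unfolding w_def using W0 by simp
  have w1: "w N \<le> 1" for N unfolding w_def using W1[of N] by (simp add: field_simps)
  have WS: "W (Suc N) = W N + H (y (Suc N))" for N unfolding W_def by simp
  have yw: "y (Suc N) = w N + r N" if "N \<ge> 1" for N using rec that unfolding w_def W_def by simp
  have "eventually (\<lambda>N. \<bar>r N\<bar> < \<epsilon>/2) sequentially"
    using r e by (auto simp: tendsto_iff dist_real_def dest!: spec[of _ "\<epsilon>/2"])
  moreover have "eventually (\<lambda>N. 2/\<epsilon> < real N) sequentially"
    by (rule eventually_sequentiallyI[of "nat \<lceil>2/\<epsilon>\<rceil> + 1"]) linarith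
  moreover have "eventually (\<lambda>N::nat. N \<ge> 1) sequentially" by (rule eventually_ge_at_top)
  ultimately have "eventually (\<lambda>N. \<bar>r N\<bar> < \<epsilon>/2 \<and> 2/\<epsilon> < real N \<and> N \<ge> 1) sequentially"
    by eventually_elim auto
  then obtain N0 where N0: "\<And>N. N \<ge> N0 \<Longrightarrow> \<bar>r N\<bar> < \<epsilon>/2 \<and> 2/\<epsilon> < real N \<and> N \<ge> 1"
    by (auto simp: eventually_sequentially)
  have N0': "N \<ge> N0 \<Longrightarrow> 1 / (real N + 2) < \<epsilon>/2" for N
  proof -
    assume "N \<ge> N0"
    then have "2/\<epsilon> < real N" using N0 by auto
    then have "2 < real N * \<epsilon>" using e by (simp add: field_simps)
    then show ?thesis using e by (simp add: field_simps)
  qed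
  have big: "ys < y (Suc N)" if "N \<ge> N0" "w N \<ge> ys + \<epsilon>/2" for N
    using yw[of N] N0[of N] that by auto
  have Hy: "H (y (Suc N)) \<le> ys" if "N \<ge> N0" "w N \<ge> ys + \<epsilon>/2" for N
  proof -
    have "H (y (Suc N)) \<le> H ys"
    proof -
      have "y (Suc N) \<in> {0..1}" using y01 by simp
      then show ?thesis using Hmono[rule_format, of ys "y (Suc N)"] ys(1) big[OF that] by auto
    qed
    then show ?thesis using ys by simp
  qed
  have ex: "\<exists>N1\<ge>N0. w N1 < ys + \<epsilon>/2"
  proof (rule ccontr)
    assume "\<not> ?thesis"
    then have A: "\<And>N. N \<ge> N0 \<Longrightarrow> w N \<ge> ys + \<epsilon>/2" by force
    have B: "W (N0 + j) \<le> W N0 + real j * ys" for j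
    proof (induction j)
      case 0 then show ?case by simp
    next
      case (Suc j)
      have "W (N0 + Suc j) = W (N0 + j) + H (y (Suc (N0 + j)))" using WS by simp
      also have "\<dots> \<le> W (N0 + j) + ys" using Hy[of "N0 + j"] A[of "N0+j"] by simp
      finally show ?case using Suc by (simp add: algebra_simps)
    qed
    obtain j :: nat where j: "real j > 2 * real N0 / \<epsilon>" using reals_Archimedean2 by blast
    have "ys + \<epsilon>/2 \<le> w (N0 + j)" using A by simp
    then have "(ys + \<epsilon>/2) * (real (N0 + j) + 1) \<le> W (N0 + j)" unfolding w_def
      by (simp add: field_simps)
    also have "\<dots> \<le> W N0 + real j * ys" by (rule B)
    also have "\<dots> \<le> real N0 + real j * ys" using W1[of N0] by simp
    finally have "(ys + \<epsilon>/2) * (real N0 + real j + 1) \<le> real N0 + real j * ys" by simp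
    then have "ys * (real N0 + 1) + \<epsilon>/2 * (real N0 + real j + 1) \<le> real N0"
      by (simp add: algebra_simps)
    moreover have "ys * (real N0 + 1) \<ge> 0" using ys by simp
    moreover have "\<epsilon>/2 * real j > real N0" using j e by (simp add: field_simps)
    moreover have "\<epsilon>/2 * (real N0 + real j + 1) \<ge> \<epsilon>/2 * real j" using e by simp
    ultimately show False by linarith
  qed
  then obtain N1 where N1: "N1 \<ge> N0" "w N1 < ys + \<epsilon>/2" by blast
  have inv: "w N < ys + \<epsilon>" if "N \<ge> N1" for N
    using that
  proof (induction N rule: dec_induct)
    case base then show ?case using N1 e by simp
  next
    case (step N)
    have wS: "w (Suc N) = (real (N+1) * w N + H (y (Suc N))) / (real N + 2)"
    proof -
      have a: "real (N+1) * w N = W N" unfolding w_def by (simp add: field_simps)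
      have "w (Suc N) = (W N + H (y (Suc N))) / (real N + 2)" unfolding w_def WS
        by (simp add: add.commute)
      then show ?thesis using a by simp
    qed
    show ?case
    proof (cases "w N < ys + \<epsilon>/2")
      case True
      have "H (y (Suc N)) \<le> 1" using H01 y01 by simp
      then have "w (Suc N) \<le> (real (N+1) * w N + 1) / (real N + 2)" unfolding wS
        by (simp add: divide_right_mono)
      also have "\<dots> = w N + (1 - w N) / (real N + 2)" by (simp add: field_simps)
      also have "\<dots> \<le> w N + 1 / (real N + 2)" using w0[of N] by (simp add: divide_right_mono)
      also have "\<dots> < ys + \<epsilon>/2 + \<epsilon>/2" using True N0'[of N] step N1 by simp
      finally show ?thesis by simp
    next
      case False
      then have "H (y (Suc N)) \<le> w N" using Hy[of N] step N1 ys by simp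
      then have "w (Suc N) \<le> (real (N+1) * w N + w N) / (real N + 2)" unfolding wS
        by (simp add: divide_right_mono)
      also have "\<dots> = w N" by (simp add: field_simps)
      finally show ?thesis using step by simp
    qed
  qed
  show ?thesis
  proof (rule eventually_sequentiallyI[of "Suc N1"])
    fix n assume n: "Suc N1 \<le> n"
    then obtain N where N: "n = Suc N" "N \<ge> N1" by (cases n) auto
    have "y n = w N + r N" using yw[of N] N N0[of N] N1 by simp
    also have "\<dots> < ys + \<epsilon> + \<epsilon>/2"
    proof -
      have "\<bar>r N\<bar> < \<epsilon>/2" using N0[of N] N N1 by simp
      then show ?thesis using inv[of N] N by linarith
    qed
    finally show "y n < ys + 2 * \<epsilon>" using e by simp
  qed
qed

lemma det_conv:
  fixes y r :: "nat \<Rightarrow> real" and H :: "real \<Rightarrow> real"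
  assumes y01: "\<forall>n\<ge>1. y n \<in> {0..1}"
    and Hmono: "\<forall>a\<in>{0..1}. \<forall>b\<in>{0..1}. a \<le> b \<longrightarrow> H b \<le> H a"
    and H01: "\<forall>a\<in>{0..1}. H a \<in> {0..1}"
    and ys: "ys \<in> {0..1}" "H ys = ys"
    and r: "r \<longlonglongrightarrow> 0"
    and rec: "\<forall>N\<ge>1. y (Suc N) = (\<Sum>m=1..N. H (y m)) / (real N + 1) + r N"
  shows "y \<longlonglongrightarrow> ys"
proof -
  define y' where "y' n = 1 - y n" for n
  define H' where "H' a = 1 - H (1 - a)" for a
  define r' where "r' N = 1 / (real N + 1) - r N" for N
  have r': "r' \<longlonglongrightarrow> 0"
  proof -
    have "(\<lambda>N. 1 / (real N + 1)) \<longlonglongrightarrow> 0" using LIMSEQ_inverse_real_of_nat by (simp add: inverse_eq_divide add.commute)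
    then show ?thesis unfolding r'_def using tendsto_diff[OF _ r] by fastforce
  qed
  have rec': "\<forall>N\<ge>1. y' (Suc N) = (\<Sum>m=1..N. H' (y' m)) / (real N + 1) + r' N"
  proof (intro allI impI)
    fix N :: nat assume "N \<ge> 1"
    have "(\<Sum>m=1..N. H' (y' m)) = real N - (\<Sum>m=1..N. H (y m))"
      unfolding H'_def y'_def by (simp add: sum_subtractf)
    moreover have "y (Suc N) = (\<Sum>m=1..N. H (y m)) / (real N + 1) + r N"
      using rec \<open>N \<ge> 1\<close> by simp
    moreover have "(real N - S) / (real N + 1) + (1 / (real N + 1) - r N) = 1 - (S / (real N + 1) + r N)"
      for S :: real
    proof -
      have d: "real N + 1 \<noteq> 0" by simp
      have "(real N - S) / (real N + 1) + 1 / (real N + 1) = (real N + 1 - S) / (real N + 1)"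
        by (simp add: add_divide_distrib[symmetric])
      also have "\<dots> = 1 - S / (real N + 1)" using d by (simp add: diff_divide_distrib)
      finally show ?thesis by simp
    qed
    ultimately show "y' (Suc N) = (\<Sum>m=1..N. H' (y' m)) / (real N + 1) + r' N"
      unfolding y'_def r'_def by simp
  qed
  show ?thesis
  proof (rule tendstoI)
    fix e :: real assume e: "e > 0"
    have up: "eventually (\<lambda>n. y n < ys + 2 * (e/2)) sequentially"
      by (rule det_upper[OF y01 Hmono H01 ys r rec]) (use e in simp)
    have lo: "eventually (\<lambda>n. y' n < (1 - ys) + 2 * (e/2)) sequentially"
    proof (rule det_upper[OF _ _ _ _ _ r' rec'])
      show "\<forall>n\<ge>1. y' n \<in> {0..1}" using y01 unfolding y'_def by auto
      show "\<forall>a\<in>{0..1}. \<forall>b\<in>{0..1}. a \<le> b \<longrightarrow> H' b \<le> H' a"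
        using Hmono unfolding H'_def by auto
      show "\<forall>a\<in>{0..1}. H' a \<in> {0..1}" using H01 unfolding H'_def by auto
      show "1 - ys \<in> {0..1}" "H' (1 - ys) = 1 - ys" using ys unfolding H'_def by auto
    qed (use e in simp)
    show "eventually (\<lambda>n. dist (y n) ys < e) sequentially"
      using up lo by eventually_elim (auto simp: dist_real_def y'_def abs_less_iff)
  qed
qed




lemma measurable_card_pred:
  assumes "finite I" "\<And>i. i \<in> I \<Longrightarrow> Measurable.pred N (P i)"
  shows "(\<lambda>\<omega>. card {i\<in>I. P i \<omega>}) \<in> measurable N (count_space UNIV)"
  using assms
proof (induction I rule: finite_induct)
  case empty then show ?case by simp
next
  case (insert x I)
  have e: "card {i\<in>insert x I. P i \<omega>} = (if P x \<omega> then Suc (card {i\<in>I. P i \<omega>}) else card {i\<in>I. P i \<omega>})" for \<omega>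
  proof -
    have "{i\<in>insert x I. P i \<omega>} = (if P x \<omega> then insert x {i\<in>I. P i \<omega>} else {i\<in>I. P i \<omega>})"
      using insert by auto
    then show ?thesis using insert by simp
  qed
  have m: "(\<lambda>\<omega>. card {i\<in>I. P i \<omega>}) \<in> measurable N (count_space UNIV)" using insert by auto
  have p: "Measurable.pred N (P x)" using insert by auto
  show ?case unfolding e
    apply (rule measurable_If)
      apply (rule measurable_compose[OF m])
      apply simp
     apply (rule m)
    using p by (simp add: pred_def)
qed

definition xi :: "(nat \<Rightarrow> int) \<Rightarrow> nat \<Rightarrow> real" where
  "xi x j = (if x j = 1 then 1 else 0)"
definition Yc :: "(nat \<Rightarrow> int) \<Rightarrow> nat \<Rightarrow> real" where
  "Yc x m = real (card {j\<in>{1..m}. x j = 1})"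

locale erw =
  fixes M :: "'a measure"
    and q p :: real and k :: nat and f :: "real \<Rightarrow> real"
    and X :: "nat \<Rightarrow> 'a \<Rightarrow> int"
    and U :: "nat \<Rightarrow> nat \<Rightarrow> 'a \<Rightarrow> nat"
    and V :: "nat \<Rightarrow> 'a \<Rightarrow> real"
  assumes p: "0 < p" "p < 1" "p \<noteq> 1/2"
    and k: "1 \<le> k"
    and f_range: "\<forall>x\<in>{0..1}. f x \<in> {0..1}"
    and M: "prob_space M"
    and indep: "prob_space.indep_vars M (\<lambda>_. borel) (erw_noise (X 1) U V) (erw_index_set k)"
    and X1_vals: "\<forall>\<omega>\<in>space M. X 1 \<omega> \<in> {-1, 1}"
    and U_vals: "\<forall>n\<ge>1. \<forall>i\<in>{1..k}. \<forall>\<omega>\<in>space M. U n i \<omega> \<in> {1..n}"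
    and U_unif: "\<forall>n\<ge>1. \<forall>i\<in>{1..k}. \<forall>j\<in>{1..n}.
                   measure M {\<omega>\<in>space M. U n i \<omega> = j} = 1 / real n"
    and V_unif: "\<forall>n\<ge>1. distr M lborel (V n) = uniform_measure lborel {0..1}"
    and X_step: "\<forall>n\<ge>1. \<forall>\<omega>\<in>space M. X (Suc n) \<omega> =
        (let c = real (erw_count k X U n \<omega>) / real k in
         if V n \<omega> \<le> p * f c + (1 - p) * (1 - f c) then 1 else -1)"
begin

sublocale prob_space M by (rule M)

definition noise where "noise = erw_noise (X 1) U V"
definition E where "E j = {noise j -` A \<inter> space M | A. A \<in> sets borel}"
definition Past where "Past n = {First} \<union> {Samp m i | m i. 1 \<le> m \<and> m < n \<and> i \<in> {1..k}} \<union> {Coin m | m. 1 \<le> m \<and> m < n}"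
definition Fn where "Fn n = sigma (space M) (\<Union>j\<in>Past n. E j)"
definition cc where "cc j = p * f (real (min j k) / real k) + (1 - p) * (1 - f (real (min j k) / real k))"
definition H where "H = bern k cc"

lemma noise_rv: "j \<in> erw_index_set k \<Longrightarrow> noise j \<in> borel_measurable M"
  using indep unfolding indep_vars_def2 noise_def by auto

lemma indep_E: "indep_sets E (erw_index_set k)"
  using indep unfolding indep_vars_def2 noise_def E_def by auto

lemma Past_sub: "Past n \<subseteq> erw_index_set k"
  unfolding Past_def erw_index_set_def by auto

lemma E_sets: "j \<in> erw_index_set k \<Longrightarrow> E j \<subseteq> sets M"
  using noise_rv unfolding E_def by (auto simp: measurable_sets)

lemma E_Pow: "j \<in> erw_index_set k \<Longrightarrow> E j \<subseteq> Pow (space M)"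
  unfolding E_def by auto

lemma gen_Pow: "(\<Union>j\<in>Past n. E j) \<subseteq> Pow (space M)"
  using E_Pow Past_sub by blast

lemma space_Fn[simp]: "space (Fn n) = space M"
  unfolding Fn_def by (simp add: space_measure_of_conv)

lemma sets_Fn: "sets (Fn n) = sigma_sets (space M) (\<Union>j\<in>Past n. E j)"
  unfolding Fn_def using gen_Pow by (simp add: sets_measure_of_conv)

lemma subalg_Fn: "subalgebra M (Fn n)"
proof -
  have "(\<Union>j\<in>Past n. E j) \<subseteq> sets M" using E_sets Past_sub by blast
  then have "sigma_sets (space M) (\<Union>j\<in>Past n. E j) \<subseteq> sets M"
    by (rule sets.sigma_sets_subset)
  then show ?thesis unfolding subalgebra_def sets_Fn by simp
qed

lemma E_in_Fn: "j \<in> Past n \<Longrightarrow> A \<in> E j \<Longrightarrow> A \<in> sets (Fn n)"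
  unfolding sets_Fn by (auto intro: sigma_sets.Basic)

lemma noise_meas_Fn: assumes "j \<in> Past n" shows "noise j \<in> borel_measurable (Fn n)"
proof (rule measurableI)
  fix A :: "real set" assume A: "A \<in> sets borel"
  have "noise j -` A \<inter> space M \<in> E j" using A unfolding E_def by blast
  then show "noise j -` A \<inter> space (Fn n) \<in> sets (Fn n)"
    using E_in_Fn[OF assms] by simp
qed simp

lemma X1_meas_Fn: "X 1 \<in> measurable (Fn n) (count_space UNIV)"
  unfolding measurable_count_space_eq2_countable
proof safe
  fix a :: int
  have "X 1 -` {a} \<inter> space (Fn n) = noise First -` {real_of_int a} \<inter> space M"
    by (auto simp: noise_def erw_noise_def)
  also have "\<dots> \<in> sets (Fn n)"
    by (rule E_in_Fn[of First]) (auto simp: Past_def E_def)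
  finally show "X 1 -` {a} \<inter> space (Fn n) \<in> sets (Fn n)" .
qed simp

lemma U_meas_Fn:
  assumes "1 \<le> m" "m < n" "i \<in> {1..k}"
  shows "U m i \<in> measurable (Fn n) (count_space {1..m})"
  unfolding measurable_count_space_eq2_countable
proof safe
  show "\<omega> \<in> space (Fn n) \<Longrightarrow> U m i \<omega> \<in> {1..m}" for \<omega> using U_vals assms by auto
  fix a :: nat
  have "U m i -` {a} \<inter> space (Fn n) = noise (Samp m i) -` {real a} \<inter> space M"
    by (auto simp: noise_def erw_noise_def)
  also have "\<dots> \<in> sets (Fn n)"
    by (rule E_in_Fn[of "Samp m i"]) (use assms in \<open>auto simp: Past_def E_def\<close>)
  finally show "U m i -` {a} \<inter> space (Fn n) \<in> sets (Fn n)" .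
qed

lemma V_meas_Fn:
  assumes "1 \<le> m" "m < n"
  shows "V m \<in> borel_measurable (Fn n)"
proof -
  have "noise (Coin m) \<in> borel_measurable (Fn n)"
    by (rule noise_meas_Fn) (use assms in \<open>auto simp: Past_def\<close>)
  then show ?thesis by (simp add: noise_def erw_noise_def)
qed

lemma count_le_k: "erw_count k X U m \<omega> \<le> k"
proof -
  have "erw_count k X U m \<omega> \<le> card {1..k}" unfolding erw_count_def
    by (rule card_mono) auto
  then show ?thesis by simp
qed

lemma X_Suc_eq:
  assumes "1 \<le> m" "\<omega> \<in> space M"
  shows "X (Suc m) \<omega> = (if V m \<omega> \<le> cc (erw_count k X U m \<omega>) then 1 else -1)"
  using X_step assms count_le_k[of m \<omega>] by (simp add: cc_def Let_def min_absorb1)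

lemma X_vals: assumes "1 \<le> j" "\<omega> \<in> space M" shows "X j \<omega> \<in> {-1, 1}"
proof (cases j)
  case 0 then show ?thesis using assms by simp
next
  case (Suc m)
  from assms show ?thesis using Suc X1_vals X_Suc_eq[of m \<omega>]
    by (cases "m = 0") auto
qed

lemma X_meas_Fn: "1 \<le> j \<Longrightarrow> j \<le> n \<Longrightarrow> X j \<in> measurable (Fn n) (count_space UNIV)"
proof (induction j rule: less_induct)
  case (less j)
  show ?case
  proof (cases "j = 1")
    case True then show ?thesis using X1_meas_Fn by simp
  next
    case False
    then obtain m where m: "j = Suc m" "1 \<le> m" using less.prems by (cases j) auto
    have IH: "i \<in> {1..m} \<Longrightarrow> X i \<in> measurable (Fn n) (count_space UNIV)" for i
      using less m by auto
    have pr: "Measurable.pred (Fn n) (\<lambda>\<omega>. X (U m i \<omega>) \<omega> = 1)" if i: "i \<in> {1..k}" for i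
    proof (rule measurable_compose_countable'[where I="{1..m}" and f="\<lambda>j \<omega>. X j \<omega> = 1"])
      show "(\<lambda>\<omega>. X j \<omega> = 1) \<in> measurable (Fn n) (count_space UNIV)" if "j \<in> {1..m}" for j
        using measurable_compose[OF IH[OF that], of "\<lambda>x. x = 1"] by simp
      show "U m i \<in> measurable (Fn n) (count_space {1..m})"
        by (rule U_meas_Fn) (use m less.prems i in auto)
    qed simp
    have cnt: "(\<lambda>\<omega>. erw_count k X U m \<omega>) \<in> measurable (Fn n) (count_space UNIV)"
      unfolding erw_count_def by (rule measurable_card_pred) (use pr in auto)
    have ccm: "(\<lambda>\<omega>. cc (erw_count k X U m \<omega>)) \<in> borel_measurable (Fn n)"
      using measurable_compose[OF cnt, of cc] by simp
    have Vm: "V m \<in> borel_measurable (Fn n)" by (rule V_meas_Fn) (use m less.prems in auto)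
    have "(\<lambda>\<omega>. if V m \<omega> \<le> cc (erw_count k X U m \<omega>) then (1::int) else -1) \<in> measurable (Fn n) (count_space UNIV)"
      using ccm Vm by measurable
    then show ?thesis
      by (rule measurable_cong[THEN iffD1, rotated]) (use m X_Suc_eq in auto)
  qed
qed

lemma X_meas: "1 \<le> j \<Longrightarrow> X j \<in> measurable M (count_space UNIV)"
  using measurable_from_subalg[OF subalg_Fn X_meas_Fn[of j j]] by simp

lemma Int_stable_E: "Int_stable (E j)"
  unfolding Int_stable_def E_def
proof safe
  fix A B :: "real set" assume "A \<in> sets borel" "B \<in> sets borel"
  then show "\<exists>C. noise j -` A \<inter> space M \<inter> (noise j -` B \<inter> space M) = noise j -` C \<inter> space M \<and> C \<in> sets borel"
    by (intro exI[of _ "A \<inter> B"]) auto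
qed

lemma sets_Fn_space: "B \<in> sets (Fn n) \<Longrightarrow> B \<subseteq> space M"
  using sets.sets_into_space[of B "Fn n"] by simp

lemma IND:
  assumes n: "1 \<le> n" and B: "B \<in> sets (Fn n)"
  shows "prob (B \<inter> {\<omega>\<in>space M. (\<forall>i\<in>{1..k}. U n i \<omega> = u i) \<and> V n \<omega> \<le> t}) = prob B * (\<Prod>i\<in>{1..k}. prob {\<omega>\<in>space M. U n i \<omega> = u i}) * prob {\<omega>\<in>space M. V n \<omega> \<le> t}"
proof -
  define grp where "grp j = (case j of First \<Rightarrow> Past n | Samp m i \<Rightarrow> {Samp m i} | Coin m \<Rightarrow> {Coin m})" for j
  define J where "J = insert First (insert (Coin n) (Samp n ` {1..k}))"
  have un: "(\<Union>j\<in>J. grp j) \<subseteq> erw_index_set k"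
  proof -
    have a: "Coin n \<in> erw_index_set k" "\<And>i. i\<in>{1..k} \<Longrightarrow> Samp n i \<in> erw_index_set k"
      using n by (auto simp: erw_index_set_def)
    show ?thesis using a Past_sub unfolding J_def by (auto simp: grp_def)
  qed
  have ind1: "indep_sets E (\<Union>j\<in>J. grp j)" by (rule indep_sets_mono_index[OF un indep_E])
  have disj: "disjoint_family_on grp J"
  proof -
    have a: "Coin n \<notin> Past n" "\<And>i. Samp n i \<notin> Past n" by (auto simp: Past_def)
    show ?thesis using a unfolding disjoint_family_on_def J_def by (auto simp: grp_def)
  qed
  have ind2: "indep_sets (\<lambda>j. sigma_sets (space M) (\<Union>i\<in>grp j. E i)) J"
    by (rule indep_sets_collect_sigma[OF ind1 _ disj]) (rule Int_stable_E)
  define A where "A j = (case j of First \<Rightarrow> B | Samp _ i \<Rightarrow> {\<omega>\<in>space M. U n i \<omega> = u i}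
                     | Coin _ \<Rightarrow> {\<omega>\<in>space M. V n \<omega> \<le> t})" for j
  have AJ: "\<forall>j\<in>J. A j \<in> sigma_sets (space M) (\<Union>i\<in>grp j. E i)"
  proof
    fix j assume j: "j \<in> J"
    show "A j \<in> sigma_sets (space M) (\<Union>i\<in>grp j. E i)"
    proof (cases j)
      case First
      have "A j = B" "grp j = Past n" using First by (simp_all add: A_def grp_def)
      then show ?thesis using B unfolding sets_Fn by simp
    next
      case (Samp m i)
      then have mn: "m = n" using j unfolding J_def by auto
      have "A j = noise (Samp n i) -` {real (u i)} \<inter> space M"
        using Samp mn by (auto simp: A_def noise_def erw_noise_def)
      moreover have "noise (Samp n i) -` {real (u i)} \<inter> space M \<in> E (Samp n i)"
        unfolding E_def by (rule CollectI, rule exI[of _ "{real (u i)}"]) simp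
      moreover have "grp j = {Samp n i}" using Samp mn by (simp add: grp_def)
      ultimately show ?thesis by (auto intro: sigma_sets.Basic)
    next
      case (Coin m)
      then have mn: "m = n" using j unfolding J_def by auto
      have "A j = noise (Coin n) -` {..t} \<inter> space M"
        using Coin mn by (auto simp: A_def noise_def erw_noise_def)
      moreover have "noise (Coin n) -` {..t} \<inter> space M \<in> E (Coin n)"
        unfolding E_def by (rule CollectI, rule exI[of _ "{..t}"]) simp
      moreover have "grp j = {Coin n}" using Coin mn by (simp add: grp_def)
      ultimately show ?thesis by (auto intro: sigma_sets.Basic)
    qed
  qed
  have fin: "finite J" unfolding J_def by simp
  have P: "prob (\<Inter>j\<in>J. A j) = (\<Prod>j\<in>J. prob (A j))"
    by (rule indep_setsD[OF ind2 subset_refl _ fin AJ]) (simp add: J_def)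
  have Bs: "B \<subseteq> space M" using sets_Fn_space[OF B] .
  have "(\<Inter>j\<in>J. A j) = B \<inter> {\<omega>\<in>space M. (\<forall>i\<in>{1..k}. U n i \<omega> = u i) \<and> V n \<omega> \<le> t}"
    using Bs unfolding J_def by (auto simp: A_def)
  moreover have "(\<Prod>j\<in>J. prob (A j)) = prob B * ((\<Prod>i\<in>{1..k}. prob {\<omega>\<in>space M. U n i \<omega> = u i}) * prob {\<omega>\<in>space M. V n \<omega> \<le> t})"
  proof -
    have "(\<Prod>j\<in>J. prob (A j)) = prob (A First) * (prob (A (Coin n)) * (\<Prod>j\<in>Samp n ` {1..k}. prob (A j)))"
    proof -
      have f1: "First \<notin> insert (Coin n) (Samp n ` {1..k})" by auto
      have f2: "Coin n \<notin> Samp n ` {1..k}" by auto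
      show ?thesis unfolding J_def
        by (simp only: prod.insert[OF _ f1] prod.insert[OF _ f2] finite_imageI finite_atLeastAtMost finite_insert)
    qed
    also have "(\<Prod>j\<in>Samp n ` {1..k}. prob (A j)) = (\<Prod>i\<in>{1..k}. prob {\<omega>\<in>space M. U n i \<omega> = u i})"
    proof -
      have "inj_on (Samp n) {1..k}" by (auto simp: inj_on_def)
      then have "(\<Prod>j\<in>Samp n ` {1..k}. prob (A j)) = (\<Prod>i\<in>{1..k}. prob (A (Samp n i)))"
        by (rule prod.reindex[unfolded comp_def])
      then show ?thesis by (simp add: A_def)
    qed
    finally show ?thesis by (simp add: A_def mult.assoc)
  qed
  ultimately show ?thesis using P by (simp add: mult.assoc)
qed

lemma V_lborel: "1 \<le> n \<Longrightarrow> V n \<in> measurable M lborel"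
proof -
  assume "1 \<le> n"
  then have "noise (Coin n) \<in> borel_measurable M" by (intro noise_rv) (auto simp: erw_index_set_def)
  then show ?thesis by (simp add: noise_def erw_noise_def measurable_lborel2)
qed

lemma probV:
  assumes n: "1 \<le> n" and t: "t \<in> {0..1}"
  shows "prob {\<omega>\<in>space M. V n \<omega> \<le> t} = t"
proof -
  have "prob {\<omega>\<in>space M. V n \<omega> \<le> t} = measure (distr M lborel (V n)) {..t}"
    by (subst measure_distr[OF V_lborel[OF n]]) (auto intro!: arg_cong[where f=prob])
  also have "\<dots> = measure (uniform_measure lborel {0..1}) {..t}" using V_unif n by simp
  also have "\<dots> = measure lborel ({0..1} \<inter> {..t}) / measure lborel {0..(1::real)}"
    by (subst measure_uniform_measure) auto
  also have "{0..1} \<inter> {..t} = {0..t}" using t by auto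
  finally show ?thesis using t by simp
qed

lemma cc_range: "cc j \<in> {0..1}"
proof -
  have t: "real (min j k) / real k \<in> {0..1}" using k by auto
  then have "f (real (min j k) / real k) \<in> {0..1}" using f_range by blast
  then show ?thesis unfolding cc_def using p
    by (auto simp: convex_bound_le intro!: add_nonneg_nonneg mult_nonneg_nonneg)
qed

lemma Av_sets:
  assumes "1 \<le> n"
  shows "{\<omega>\<in>space M. \<forall>j\<in>{1..n}. X j \<omega> = v j} \<in> sets (Fn n)"
proof -
  have "Measurable.pred (Fn n) (\<lambda>\<omega>. \<forall>j\<in>{1..n}. X j \<omega> = v j)"
  proof (rule pred_intros_finite(3))
    fix j assume "j \<in> {1..n}"
    then have "X j \<in> measurable (Fn n) (count_space UNIV)" by (intro X_meas_Fn) auto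
    then show "Measurable.pred (Fn n) (\<lambda>\<omega>. X j \<omega> = v j)"
      using measurable_compose[of "X j" "Fn n" "count_space UNIV" "\<lambda>x. x = v j"] by simp
  qed simp
  then show ?thesis by (simp add: pred_def)
qed

lemma KEYprob:
  assumes n: "1 \<le> n"
  shows "prob ({\<omega>\<in>space M. \<forall>j\<in>{1..n}. X j \<omega> = v j} \<inter> {\<omega>\<in>space M. X (Suc n) \<omega> = 1})
       = prob {\<omega>\<in>space M. \<forall>j\<in>{1..n}. X j \<omega> = v j} * H (real (card {j\<in>{1..n}. v j = 1}) / real n)"
proof -
  define Av where "Av = {\<omega>\<in>space M. \<forall>j\<in>{1..n}. X j \<omega> = v j}"
  define Aset where "Aset = {j\<in>{1..n}. v j = 1}"
  define PU where "PU = PiE {1..k} (\<lambda>_. {1..n})"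
  define cu where "cu u = card {i\<in>{1..k}. u i \<in> Aset}" for u :: "nat \<Rightarrow> nat"
  define Eu where "Eu u = Av \<inter> {\<omega>\<in>space M. (\<forall>i\<in>{1..k}. U n i \<omega> = u i) \<and> V n \<omega> \<le> cc (cu u)}" for u
  have AvF: "Av \<in> sets (Fn n)" unfolding Av_def by (rule Av_sets[OF n])
  have AvM: "Av \<in> sets M" using AvF subalg_Fn unfolding subalgebra_def by auto
  have cnt: "erw_count k X U n \<omega> = cu u"
    if "\<omega> \<in> Av" "\<forall>i\<in>{1..k}. U n i \<omega> = u i" for \<omega> u
  proof -
    have "\<omega> \<in> space M" using that unfolding Av_def by auto
    then have Ur: "i \<in> {1..k} \<Longrightarrow> U n i \<omega> \<in> {1..n}" for i using U_vals n by auto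
    have "{i\<in>{1..k}. X (U n i \<omega>) \<omega> = 1} = {i\<in>{1..k}. u i \<in> Aset}"
    proof (intro Collect_cong conj_cong refl)
      fix i assume i: "i \<in> {1..k}"
      have "X (U n i \<omega>) \<omega> = v (U n i \<omega>)" using that(1) Ur[OF i] unfolding Av_def by auto
      then show "(X (U n i \<omega>) \<omega> = 1) = (u i \<in> Aset)" using that(2) i Ur[OF i] unfolding Aset_def by auto
    qed
    then show ?thesis unfolding erw_count_def cu_def by simp
  qed
  have union: "Av \<inter> {\<omega>\<in>space M. X (Suc n) \<omega> = 1} = (\<Union>u\<in>PU. Eu u)"
  proof (intro equalityI subsetI)
    fix \<omega> assume w: "\<omega> \<in> Av \<inter> {\<omega>\<in>space M. X (Suc n) \<omega> = 1}"
    define u where "u = restrict (\<lambda>i. U n i \<omega>) {1..k}"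
    have sp: "\<omega> \<in> space M" using w by auto
    have uP: "u \<in> PU" unfolding u_def PU_def using U_vals n sp by auto
    have ueq: "\<forall>i\<in>{1..k}. U n i \<omega> = u i" unfolding u_def by auto
    have "V n \<omega> \<le> cc (erw_count k X U n \<omega>)" using w X_Suc_eq[OF n sp]
      by (auto split: if_splits)
    then have "\<omega> \<in> Eu u" using cnt[OF _ ueq] w ueq sp unfolding Eu_def by auto
    then show "\<omega> \<in> (\<Union>u\<in>PU. Eu u)" using uP by auto
  next
    fix \<omega> assume "\<omega> \<in> (\<Union>u\<in>PU. Eu u)"
    then obtain u where u: "u \<in> PU" "\<omega> \<in> Eu u" by auto
    then have sp: "\<omega> \<in> space M" and av: "\<omega> \<in> Av" and ueq: "\<forall>i\<in>{1..k}. U n i \<omega> = u i"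
      and vle: "V n \<omega> \<le> cc (cu u)" unfolding Eu_def by auto
    have "X (Suc n) \<omega> = 1" using X_Suc_eq[OF n sp] cnt[OF av ueq] vle by simp
    then show "\<omega> \<in> Av \<inter> {\<omega>\<in>space M. X (Suc n) \<omega> = 1}" using av sp by auto
  qed
  have disj: "disjoint_family_on Eu PU"
  proof (unfold disjoint_family_on_def, intro ballI impI)
    fix u u' assume u: "u \<in> PU" "u' \<in> PU" "u \<noteq> u'"
    then obtain i where i: "i \<in> {1..k}" "u i \<noteq> u' i" unfolding PU_def
      using PiE_ext by blast
    then show "Eu u \<inter> Eu u' = {}" unfolding Eu_def by auto
  qed
  have EuB: "Eu u = Av \<inter> {\<omega>\<in>space M. (\<forall>i\<in>{1..k}. U n i \<omega> = u i) \<and> V n \<omega> \<le> cc (cu u)}" for u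
    by (simp add: Eu_def)
  have probEu: "prob (Eu u) = prob Av * (1 / real n) ^ k * cc (cu u)" if u: "u \<in> PU" for u
  proof -
    have "prob (Eu u) = prob Av * (\<Prod>i\<in>{1..k}. prob {\<omega>\<in>space M. U n i \<omega> = u i}) * prob {\<omega>\<in>space M. V n \<omega> \<le> cc (cu u)}"
      unfolding EuB by (rule IND[OF n AvF])
    also have "(\<Prod>i\<in>{1..k}. prob {\<omega>\<in>space M. U n i \<omega> = u i}) = (\<Prod>i\<in>{1..k}. 1 / real n)"
    proof (intro prod.cong refl)
      fix i assume i: "i \<in> {1..k}"
      then have "u i \<in> {1..n}" using u unfolding PU_def by auto
      then show "prob {\<omega>\<in>space M. U n i \<omega> = u i} = 1 / real n" using U_unif n i by blast
    qed
    also have "prob {\<omega>\<in>space M. V n \<omega> \<le> cc (cu u)} = cc (cu u)" using probV[OF n cc_range] .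
    finally show ?thesis by simp
  qed
  have EuM: "Eu u \<in> sets M" for u
  proof -
    have "U n i \<in> measurable M (count_space UNIV)" if "i \<in> {1..k}" for i
    proof -
      have "noise (Samp n i) \<in> borel_measurable M" using that n by (intro noise_rv) (auto simp: erw_index_set_def)
      then have "(\<lambda>\<omega>. real (U n i \<omega>)) \<in> borel_measurable M" by (simp add: noise_def erw_noise_def)
      then have "(\<lambda>\<omega>. nat \<lfloor>real (U n i \<omega>)\<rfloor>) \<in> measurable M (count_space UNIV)" by measurable
      then show ?thesis by simp
    qed
    then have p1: "Measurable.pred M (\<lambda>\<omega>. \<forall>i\<in>{1..k}. U n i \<omega> = u i)"
      by (intro pred_intros_finite(3)) (auto intro: measurable_compose[where g="\<lambda>x. x = u _"])
    have p2: "Measurable.pred M (\<lambda>\<omega>. V n \<omega> \<le> cc (cu u))"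
      using V_lborel[OF n] by (simp add: measurable_lborel2)
    have "{\<omega>\<in>space M. (\<forall>i\<in>{1..k}. U n i \<omega> = u i) \<and> V n \<omega> \<le> cc (cu u)} \<in> sets M"
      using p1 p2 by (simp add: pred_def) measurable
    then show ?thesis unfolding Eu_def using AvM by auto
  qed
  have "prob (Av \<inter> {\<omega>\<in>space M. X (Suc n) \<omega> = 1}) = (\<Sum>u\<in>PU. prob (Eu u))"
    unfolding union
  proof (rule measure_finite_Union)
    show "finite PU" unfolding PU_def by (intro finite_PiE) auto
  qed (use disj EuM in \<open>auto simp: emeasure_eq_measure\<close>)
  also have "\<dots> = (\<Sum>u\<in>PU. prob Av * (1 / real n) ^ k * cc (cu u))"
    by (rule sum.cong[OF refl probEu])
  also have "\<dots> = prob Av * (1 / real n) ^ k * (\<Sum>u\<in>PU. cc (cu u))"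
    by (simp add: sum_distrib_left)
  also have "(\<Sum>u\<in>PU. cc (cu u)) = real (card {1..n}) ^ card {1..k} * bern (card {1..k}) cc (real (card Aset) / real (card {1..n}))"
    unfolding PU_def cu_def by (rule comb_bern) (use n in \<open>auto simp: Aset_def\<close>)
  also have "prob Av * (1 / real n) ^ k * (real (card {1..n}) ^ card {1..k} * bern (card {1..k}) cc (real (card Aset) / real (card {1..n})))
      = prob Av * H (real (card Aset) / real n)"
    using n by (simp add: H_def power_one_over field_simps)
  finally show ?thesis unfolding Av_def Aset_def .
qed

definition Df where "Df x m = xi x (Suc m) - H (Yc x m / real m)"
definition Xw where "Xw \<omega> = (\<lambda>j. X j \<omega>)"

lemma KEY:
  assumes n: "1 \<le> n" and g: "\<And>x x'. (\<forall>j\<in>{1..n}. x j = x' j) \<Longrightarrow> g x = g x'"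
  shows "(\<integral>\<omega>. Df (Xw \<omega>) n * g (Xw \<omega>) \<partial>M) = 0"
proof -
  define Vs where "Vs = PiE {1..n} (\<lambda>_. {-1, 1::int})"
  define Av where "Av v = {\<omega>\<in>space M. \<forall>j\<in>{1..n}. X j \<omega> = v j}" for v :: "nat \<Rightarrow> int"
  define Bv where "Bv v = Av v \<inter> {\<omega>\<in>space M. X (Suc n) \<omega> = 1}" for v
  define hv where "hv v = H (Yc v n / real n)" for v
  have finVs: "finite Vs" unfolding Vs_def by (intro finite_PiE) auto
  have AvM: "Av v \<in> sets M" for v
    using Av_sets[OF n, of v] subalg_Fn[of n] unfolding Av_def subalgebra_def by auto
  have XsM: "{\<omega>\<in>space M. X (Suc n) \<omega> = 1} \<in> sets M"
  proof -
    have "X (Suc n) \<in> measurable M (count_space UNIV)" by (rule X_meas) simp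
    then have "Measurable.pred M (\<lambda>\<omega>. X (Suc n) \<omega> = 1)"
      using measurable_compose[of "X (Suc n)" M "count_space UNIV" "\<lambda>x. x = 1"] by simp
    then show ?thesis by (simp add: pred_def)
  qed
  have BvM: "Bv v \<in> sets M" for v unfolding Bv_def using AvM XsM by auto
  have pt: "Df (Xw \<omega>) n * g (Xw \<omega>) = (\<Sum>v\<in>Vs. g v * indicator (Bv v) \<omega> - g v * hv v * indicator (Av v) \<omega>)"
    if w: "\<omega> \<in> space M" for \<omega>
  proof -
    define v0 where "v0 = restrict (Xw \<omega>) {1..n}"
    have v0V: "v0 \<in> Vs" unfolding v0_def Vs_def Xw_def using X_vals w by auto
    have inA: "\<omega> \<in> Av v \<longleftrightarrow> v = v0" if "v \<in> Vs" for v
    proof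
      assume "\<omega> \<in> Av v"
      then have "\<forall>j\<in>{1..n}. v j = v0 j" unfolding Av_def v0_def Xw_def by auto
      then show "v = v0" using that v0V unfolding Vs_def by (intro PiE_ext) auto
    qed (use w in \<open>auto simp: Av_def v0_def Xw_def\<close>)
    have g0: "g v0 = g (Xw \<omega>)" by (rule g) (auto simp: v0_def)
    have Y0: "Yc v0 n = Yc (Xw \<omega>) n" unfolding Yc_def v0_def
      by (intro arg_cong[where f="\<lambda>A. real (card A)"]) auto
    have "(\<Sum>v\<in>Vs. g v * indicator (Bv v) \<omega> - g v * hv v * indicator (Av v) \<omega>)
        = (\<Sum>v\<in>Vs. if v = v0 then g v0 * xi (Xw \<omega>) (Suc n) - g v0 * hv v0 else 0)"
    proof (intro sum.cong refl)
      fix v assume v: "v \<in> Vs"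
      show "g v * indicator (Bv v) \<omega> - g v * hv v * indicator (Av v) \<omega>
          = (if v = v0 then g v0 * xi (Xw \<omega>) (Suc n) - g v0 * hv v0 else 0)"
        using inA[OF v] w by (auto simp: Bv_def xi_def Xw_def indicator_def)
    qed
    also have "\<dots> = g v0 * xi (Xw \<omega>) (Suc n) - g v0 * hv v0"
      using v0V finVs by simp
    finally show ?thesis using g0 Y0 by (simp add: Df_def hv_def algebra_simps)
  qed
  have int0: "(\<integral>\<omega>. g v * indicator (Bv v) \<omega> - g v * hv v * indicator (Av v) \<omega> \<partial>M) = 0" for v
  proof -
    have "(\<integral>\<omega>. g v * indicator (Bv v) \<omega> - g v * hv v * indicator (Av v) \<omega> \<partial>M)
        = g v * prob (Bv v) - g v * hv v * prob (Av v)"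
      using AvM BvM by (simp add: emeasure_eq_measure)
    also have "prob (Bv v) = prob (Av v) * hv v"
      unfolding Bv_def Av_def hv_def Yc_def by (rule KEYprob[OF n])
    finally show ?thesis by simp
  qed
  have "(\<integral>\<omega>. Df (Xw \<omega>) n * g (Xw \<omega>) \<partial>M)
      = (\<integral>\<omega>. (\<Sum>v\<in>Vs. g v * indicator (Bv v) \<omega> - g v * hv v * indicator (Av v) \<omega>) \<partial>M)"
    by (rule Bochner_Integration.integral_cong[OF refl pt])
  also have "\<dots> = (\<Sum>v\<in>Vs. (\<integral>\<omega>. g v * indicator (Bv v) \<omega> - g v * hv v * indicator (Av v) \<omega> \<partial>M))"
    by (rule Bochner_Integration.integral_sum) (use AvM BvM in \<open>auto simp: emeasure_eq_measure\<close>)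
  also have "\<dots> = 0" using int0 by simp
  finally show ?thesis .
qed

definition Tf where "Tf x N = (\<Sum>m\<in>{1..N}. Df x m)"

lemma H_range: "a \<in> {0..1} \<Longrightarrow> H a \<in> {0..1}"
  unfolding H_def by (rule bern_range) (use cc_range in auto)

lemma Yc_range: "Yc x m / real m \<in> {0..1}"
proof (cases "m = 0")
  case False
  have "card {j\<in>{1..m}. x j = 1} \<le> card {1..m}" by (rule card_mono) auto
  then show ?thesis using False unfolding Yc_def by auto
qed simp

lemma Df_bound: "\<bar>Df x m\<bar> \<le> 1"
  using H_range[OF Yc_range[of x m]] unfolding Df_def xi_def by auto

lemma Tf_bound: "\<bar>Tf x N\<bar> \<le> real N"
proof -
  have "\<bar>Tf x N\<bar> \<le> (\<Sum>m\<in>{1..N}. \<bar>Df x m\<bar>)" unfolding Tf_def by (rule sum_abs)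
  also have "\<dots> \<le> (\<Sum>m\<in>{1..N}. 1)" by (intro sum_mono Df_bound)
  finally show ?thesis by simp
qed

lemma Tf_Suc: "Tf x (Suc N) = Tf x N + Df x (Suc N)"
  unfolding Tf_def by simp

lemma Df_cong: "(\<forall>j\<in>{1..Suc m}. x j = x' j) \<Longrightarrow> Df x m = Df x' m"
proof -
  assume a: "\<forall>j\<in>{1..Suc m}. x j = x' j"
  have "{j\<in>{1..m}. x j = 1} = {j\<in>{1..m}. x' j = 1}" using a by auto
  then show ?thesis using a unfolding Df_def xi_def Yc_def by simp
qed

lemma Tf_cong: "(\<forall>j\<in>{1..Suc N}. x j = x' j) \<Longrightarrow> Tf x N = Tf x' N"
  unfolding Tf_def by (intro sum.cong refl Df_cong) auto

lemma Df_meas: "(\<lambda>\<omega>. Df (Xw \<omega>) m) \<in> borel_measurable M"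
proof -
  have Xm: "\<And>j. 1 \<le> j \<Longrightarrow> X j \<in> measurable M (count_space UNIV)" by (rule X_meas)
  have pr: "\<And>j. 1 \<le> j \<Longrightarrow> Measurable.pred M (\<lambda>\<omega>. X j \<omega> = 1)"
    using measurable_compose[OF Xm, of _ "\<lambda>x. x = 1"] by simp
  have c: "(\<lambda>\<omega>. card {j\<in>{1..m}. X j \<omega> = 1}) \<in> measurable M (count_space UNIV)"
    by (rule measurable_card_pred) (use pr in auto)
  have h: "(\<lambda>\<omega>. H (real (card {j\<in>{1..m}. X j \<omega> = 1}) / real m)) \<in> borel_measurable M"
    using measurable_compose[OF c, of "\<lambda>c. H (real c / real m)"] by simp
  have x: "(\<lambda>\<omega>. if X (Suc m) \<omega> = 1 then 1 else (0::real)) \<in> borel_measurable M"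
    using pr[of "Suc m"] by measurable
  show ?thesis unfolding Df_def xi_def Yc_def Xw_def using h x by measurable
qed

lemma Tf_meas: "(\<lambda>\<omega>. Tf (Xw \<omega>) N) \<in> borel_measurable M"
  unfolding Tf_def by (intro borel_measurable_sum Df_meas)

lemma integrable_bnd:
  fixes h :: "'a \<Rightarrow> real" and B :: real
  assumes "h \<in> borel_measurable M" "\<And>\<omega>. \<omega> \<in> space M \<Longrightarrow> \<bar>h \<omega>\<bar> \<le> B"
  shows "integrable M h"
  by (rule integrable_const_bound[where B=B]) (use assms in auto)

lemma M2: "(\<integral>\<omega>. (Tf (Xw \<omega>) N)^2 \<partial>M) \<le> real N"
proof (induction N)
  case 0 then show ?case by (simp add: Tf_def)
next
  case (Suc N)
  let ?T = "\<lambda>\<omega>. Tf (Xw \<omega>) N" and ?D = "\<lambda>\<omega>. Df (Xw \<omega>) (Suc N)"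
  have mT: "?T \<in> borel_measurable M" by (rule Tf_meas)
  have mD: "?D \<in> borel_measurable M" by (rule Df_meas)
  have bT: "\<bar>?T \<omega>\<bar> \<le> real N" for \<omega> by (rule Tf_bound)
  have bD: "\<bar>?D \<omega>\<bar> \<le> 1" for \<omega> by (rule Df_bound)
  have bT2: "\<bar>(?T \<omega>)^2\<bar> \<le> real N ^ 2" for \<omega>
  proof -
    have "\<bar>?T \<omega>\<bar>^2 \<le> real N ^ 2" by (rule power_mono[OF bT]) simp
    then show ?thesis by simp
  qed
  have bDT: "\<bar>?D \<omega> * ?T \<omega>\<bar> \<le> 1 * real N" for \<omega>
    unfolding abs_mult by (rule mult_mono) (use bT bD in auto)
  have iT2: "integrable M (\<lambda>\<omega>. (?T \<omega>)^2)" by (rule integrable_bnd[OF _ bT2]) (use mT in measurable)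
  have iDT: "integrable M (\<lambda>\<omega>. ?D \<omega> * ?T \<omega>)" by (rule integrable_bnd[OF _ bDT]) (use mT mD in measurable)
  have key: "(\<integral>\<omega>. ?D \<omega> * ?T \<omega> \<partial>M) = 0"
    by (rule KEY[where g="\<lambda>x. Tf x N"]) (auto intro: Tf_cong)
  have pt: "(Tf (Xw \<omega>) (Suc N))^2 \<le> (?T \<omega>)^2 + 2 * (?D \<omega> * ?T \<omega>) + 1" for \<omega>
  proof -
    have "(?D \<omega>)^2 \<le> 1" using bD[of \<omega>] by (simp add: abs_square_le_1)
    then show ?thesis unfolding Tf_Suc by (simp add: power2_sum algebra_simps)
  qed
  have iS: "integrable M (\<lambda>\<omega>. (Tf (Xw \<omega>) (Suc N))^2)"
  proof (rule integrable_bnd)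
    show "(\<lambda>\<omega>. (Tf (Xw \<omega>) (Suc N))^2) \<in> borel_measurable M" using Tf_meas by measurable
    show "\<bar>(Tf (Xw \<omega>) (Suc N))^2\<bar> \<le> real (Suc N) ^ 2" for \<omega>
    proof -
      have "\<bar>Tf (Xw \<omega>) (Suc N)\<bar>^2 \<le> real (Suc N) ^ 2" by (rule power_mono[OF Tf_bound]) simp
      then show ?thesis by simp
    qed
  qed
  have "(\<integral>\<omega>. (Tf (Xw \<omega>) (Suc N))^2 \<partial>M) \<le> (\<integral>\<omega>. (?T \<omega>)^2 + 2 * (?D \<omega> * ?T \<omega>) + 1 \<partial>M)"
    by (rule Bochner_Integration.integral_mono[OF iS _ pt]) (use iT2 iDT in auto)
  also have "\<dots> = (\<integral>\<omega>. (?T \<omega>)^2 \<partial>M) + 2 * (\<integral>\<omega>. ?D \<omega> * ?T \<omega> \<partial>M) + 1"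
    using iT2 iDT by (simp add: prob_space)
  also have "\<dots> \<le> real (Suc N)" using Suc key by simp
  finally show ?case .
qed

lemma pow_bound: "\<bar>t\<bar> \<le> B \<Longrightarrow> \<bar>t ^ j\<bar> \<le> B ^ j" for t B :: real
  unfolding power_abs by (rule power_mono) auto

lemma quart_pt:
  fixes T D :: real
  assumes "\<bar>D\<bar> \<le> 1"
  shows "(T + D)^4 \<le> T^4 + 4 * (D * T^3) + 6 * T^2 + 4 * \<bar>T\<bar> + 1"
proof -
  have d2: "D^2 \<le> 1" using assms by (simp add: abs_square_le_1)
  have a: "T^2 * D^2 \<le> T^2" using mult_left_mono[OF d2, of "T^2"] by simp
  have "\<bar>T * D^3\<bar> \<le> \<bar>T\<bar> * 1"
    unfolding abs_mult by (rule mult_left_mono) (use pow_bound[OF assms, of 3] in auto)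
  then have b: "T * D^3 \<le> \<bar>T\<bar>" by simp
  have c: "D^4 \<le> 1" using pow_bound[OF assms, of 4] by simp
  have "(T + D)^4 = T^4 + 4 * (D * T^3) + 6 * (T^2 * D^2) + 4 * (T * D^3) + D^4"
    by (simp add: power_def algebra_simps eval_nat_numeral)
  then show ?thesis using a b c by linarith
qed

lemma M4: "(\<integral>\<omega>. (Tf (Xw \<omega>) N)^4 \<partial>M) \<le> 11 * real N ^ 2"
proof (induction N)
  case 0 then show ?case by (simp add: Tf_def)
next
  case (Suc N)
  let ?T = "\<lambda>\<omega>. Tf (Xw \<omega>) N" and ?D = "\<lambda>\<omega>. Df (Xw \<omega>) (Suc N)"
  have mT: "?T \<in> borel_measurable M" by (rule Tf_meas)
  have mD: "?D \<in> borel_measurable M" by (rule Df_meas)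
  have bT: "\<bar>?T \<omega>\<bar> \<le> real N" for \<omega> by (rule Tf_bound)
  have bD: "\<bar>?D \<omega>\<bar> \<le> 1" for \<omega> by (rule Df_bound)
  have iT4: "integrable M (\<lambda>\<omega>. (?T \<omega>)^4)"
    by (rule integrable_bnd[OF _ pow_bound[OF bT]]) (use mT in measurable)
  have iT2: "integrable M (\<lambda>\<omega>. (?T \<omega>)^2)"
    by (rule integrable_bnd[OF _ pow_bound[OF bT]]) (use mT in measurable)
  have iT1: "integrable M (\<lambda>\<omega>. \<bar>?T \<omega>\<bar>)"
    by (rule integrable_bnd[of _ "real N"]) (use mT bT in auto)
  have bDT: "\<bar>?D \<omega> * (?T \<omega>)^3\<bar> \<le> 1 * real N ^ 3" for \<omega>
    unfolding abs_mult by (rule mult_mono) (use pow_bound[OF bT] bD in auto)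
  have iDT: "integrable M (\<lambda>\<omega>. ?D \<omega> * (?T \<omega>)^3)"
    by (rule integrable_bnd[OF _ bDT]) (use mT mD in measurable)
  have key: "(\<integral>\<omega>. ?D \<omega> * (?T \<omega>)^3 \<partial>M) = 0"
  proof (rule KEY[where g="\<lambda>x. (Tf x N)^3"])
    fix x x' :: "nat \<Rightarrow> int" assume "\<forall>j\<in>{1..Suc N}. x j = x' j"
    then show "(Tf x N)^3 = (Tf x' N)^3" using Tf_cong by metis
  qed simp
  have int1: "(\<integral>\<omega>. \<bar>?T \<omega>\<bar> \<partial>M) \<le> real N"
  proof -
    have "(\<integral>\<omega>. \<bar>?T \<omega>\<bar> \<partial>M) \<le> (\<integral>\<omega>. real N \<partial>M)"
      by (rule Bochner_Integration.integral_mono[OF iT1]) (use bT in auto)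
    then show ?thesis by (simp add: prob_space)
  qed
  have iS: "integrable M (\<lambda>\<omega>. (Tf (Xw \<omega>) (Suc N))^4)"
    by (rule integrable_bnd[OF _ pow_bound[OF Tf_bound]]) (use Tf_meas in measurable)
  have "(\<integral>\<omega>. (Tf (Xw \<omega>) (Suc N))^4 \<partial>M)
      \<le> (\<integral>\<omega>. (?T \<omega>)^4 + 4 * (?D \<omega> * (?T \<omega>)^3) + 6 * (?T \<omega>)^2 + 4 * \<bar>?T \<omega>\<bar> + 1 \<partial>M)"
    by (rule Bochner_Integration.integral_mono[OF iS])
       (use iT4 iDT iT2 iT1 quart_pt[OF bD] in \<open>auto simp: Tf_Suc\<close>)
  also have "\<dots> = (\<integral>\<omega>. (?T \<omega>)^4 \<partial>M) + 4 * (\<integral>\<omega>. ?D \<omega> * (?T \<omega>)^3 \<partial>M)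
       + 6 * (\<integral>\<omega>. (?T \<omega>)^2 \<partial>M) + 4 * (\<integral>\<omega>. \<bar>?T \<omega>\<bar> \<partial>M) + 1"
    using iT4 iDT iT2 iT1 by (simp add: prob_space)
  also have "\<dots> \<le> 11 * real N ^ 2 + 0 + 6 * real N + 4 * real N + 1"
    using Suc.IH key M2[of N] int1 by simp
  also have "\<dots> \<le> 11 * real (Suc N) ^ 2" by (simp add: power2_eq_square algebra_simps)
  finally show ?case .
qed

lemma BC_eps:
  assumes e: "\<epsilon> > 0"
  shows "AE \<omega> in M. eventually (\<lambda>N. \<bar>Tf (Xw \<omega>) N\<bar> \<le> \<epsilon> * real N) sequentially"
proof -
  define A where "A N = {\<omega>\<in>space M. \<epsilon> * real N < \<bar>Tf (Xw \<omega>) N\<bar>}" for N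
  have AM: "A N \<in> sets M" for N
  proof -
    have "(\<lambda>\<omega>. Tf (Xw \<omega>) N) \<in> borel_measurable M" by (rule Tf_meas)
    then have "Measurable.pred M (\<lambda>\<omega>. \<epsilon> * real N < \<bar>Tf (Xw \<omega>) N\<bar>)" by measurable
    then show ?thesis unfolding A_def by (simp add: pred_def)
  qed
  have bnd: "measure M (A N) \<le> 11 / \<epsilon>^4 * inverse (real N ^ 2)" for N
  proof (cases "N = 0")
    case True
    then have "A N = {}" unfolding A_def Tf_def by auto
    then show ?thesis using True by simp
  next
    case False
    let ?c = "(\<epsilon> * real N)^4"
    have c: "?c > 0" using e False by simp
    have sub: "A N \<subseteq> {\<omega>\<in>space M. ?c \<le> (Tf (Xw \<omega>) N)^4}"
    proof
      fix \<omega> assume "\<omega> \<in> A N"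
      then have w: "\<omega> \<in> space M" "\<epsilon> * real N < \<bar>Tf (Xw \<omega>) N\<bar>" unfolding A_def by auto
      have "?c \<le> \<bar>Tf (Xw \<omega>) N\<bar>^4" by (rule power_mono) (use w e in auto)
      then show "\<omega> \<in> {\<omega>\<in>space M. ?c \<le> (Tf (Xw \<omega>) N)^4}" using w by simp
    qed
    have i4: "integrable M (\<lambda>\<omega>. (Tf (Xw \<omega>) N)^4)"
      by (rule integrable_bnd[OF _ pow_bound[OF Tf_bound]]) (use Tf_meas in measurable)
    have "measure M (A N) \<le> measure M {\<omega>\<in>space M. ?c \<le> (Tf (Xw \<omega>) N)^4}"
      by (rule finite_measure_mono[OF sub]) (use Tf_meas in measurable)
    also have "\<dots> \<le> (\<integral>\<omega>. (Tf (Xw \<omega>) N)^4 \<partial>M) / ?c"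
      by (rule integral_Markov_inequality_measure[OF i4 _ _ c, where A="space M"]) auto
    also have "\<dots> \<le> 11 * real N ^ 2 / ?c" by (rule divide_right_mono[OF M4]) (use c in simp)
    also have "\<dots> = 11 / \<epsilon>^4 * inverse (real N ^ 2)"
      using e False by (simp add: field_simps power_mult_distrib eval_nat_numeral)
    finally show ?thesis .
  qed
  have sm: "summable (\<lambda>N. measure M (A N))"
  proof (rule summable_comparison_test)
    show "\<exists>N0. \<forall>N\<ge>N0. norm (measure M (A N)) \<le> 11 / \<epsilon>^4 * inverse (real N ^ 2)"
      using bnd by auto
    show "summable (\<lambda>N. 11 / \<epsilon>^4 * inverse (real N ^ 2))"
      by (intro summable_mult inverse_power_summable) simp
  qed
  have "AE \<omega> in M. eventually (\<lambda>N. \<omega> \<in> space M - A N) sequentially"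
    by (rule borel_cantelli_AE1[OF AM _ sm]) (simp add: emeasure_eq_measure)
  then show ?thesis
    by (rule AE_mp) (auto intro!: AE_I2 elim!: eventually_mono simp: A_def)
qed

lemma SLLN: "AE \<omega> in M. (\<lambda>N. Tf (Xw \<omega>) N / real N) \<longlonglongrightarrow> 0"
proof -
  have "AE \<omega> in M. \<forall>r::nat. eventually (\<lambda>N. \<bar>Tf (Xw \<omega>) N\<bar> \<le> (1 / real (Suc r)) * real N) sequentially"
    by (subst AE_all_countable) (intro allI BC_eps, simp)
  then show ?thesis
  proof (rule AE_mp, intro AE_I2 impI)
    fix \<omega> assume a: "\<forall>r::nat. eventually (\<lambda>N. \<bar>Tf (Xw \<omega>) N\<bar> \<le> (1 / real (Suc r)) * real N) sequentially"
    show "(\<lambda>N. Tf (Xw \<omega>) N / real N) \<longlonglongrightarrow> 0"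
    proof (rule tendstoI)
      fix e :: real assume e: "e > 0"
      obtain r :: nat where r: "1 / real (Suc r) < e"
        using e by (metis reals_Archimedean inverse_eq_divide of_nat_Suc)
      have "eventually (\<lambda>N. \<bar>Tf (Xw \<omega>) N\<bar> \<le> (1 / real (Suc r)) * real N \<and> N \<ge> 1) sequentially"
        using a eventually_ge_at_top[of "1::nat"] by (auto intro: eventually_conj)
      then show "eventually (\<lambda>N. dist (Tf (Xw \<omega>) N / real N) 0 < e) sequentially"
      proof (rule eventually_mono)
        fix N :: nat assume N: "\<bar>Tf (Xw \<omega>) N\<bar> \<le> (1 / real (Suc r)) * real N \<and> N \<ge> 1"
        then have "\<bar>Tf (Xw \<omega>) N\<bar> / real N \<le> 1 / real (Suc r)" by (simp add: field_simps)
        then show "dist (Tf (Xw \<omega>) N / real N) 0 < e" using r by (simp add: dist_real_def)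
      qed
    qed
  qed
qed

lemma cc_strict: "0 < cc j \<and> cc j < 1"
proof -
  define t where "t = f (real (min j k) / real k)"
  have "real (min j k) / real k \<in> {0..1}" using k by auto
  then have t: "0 \<le> t" "t \<le> 1" using f_range unfolding t_def by auto
  have e: "cc j = (1 - p) + (2 * p - 1) * t" unfolding cc_def t_def by (simp add: algebra_simps)
  show ?thesis
  proof (cases "2 * p - 1 \<ge> 0")
    case True
    have "(2 * p - 1) * t \<le> (2 * p - 1) * 1" by (rule mult_left_mono) (use t True in auto)
    moreover have "(2 * p - 1) * t \<ge> 0" using t True by simp
    ultimately show ?thesis unfolding e using p by auto
  next
    case False
    have "(2 * p - 1) * 1 \<le> (2 * p - 1) * t" by (rule mult_left_mono_neg) (use t False in auto)
    moreover have "(2 * p - 1) * t \<le> 0" using t False by (simp add: mult_nonpos_nonneg)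
    ultimately show ?thesis unfolding e using p by auto
  qed
qed

lemma cc_mono:
  assumes cond: "(p > 1/2 \<and> f 1 < p / (2*p - 1)
                 \<and> (\<forall>i\<in>{1..k}. f (real i / real k) \<le> f ((real i - 1) / real k))
                 \<and> (\<exists>i\<in>{1..k}. f (real i / real k) < f ((real i - 1) / real k)))
             \<or> (p < 1/2 \<and> f 0 < (1 - p) / (1 - 2*p)
                 \<and> (\<forall>i\<in>{1..k}. f (real i / real k) \<ge> f ((real i - 1) / real k))
                 \<and> (\<exists>i\<in>{1..k}. f (real i / real k) > f ((real i - 1) / real k)))"
  shows "cc (Suc j) \<le> cc j"
proof (cases "j < k")
  case False
  then show ?thesis by (simp add: cc_def)
next
  case True
  have e: "cc i = (1 - p) + (2 * p - 1) * f (real (min i k) / real k)" for i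
    unfolding cc_def by (simp add: algebra_simps)
  have i: "Suc j \<in> {1..k}" using True by auto
  have mins: "min (Suc j) k = Suc j" "min j k = j" using True by auto
  have rj: "real (Suc j) - 1 = real j" by simp
  show ?thesis
    using cond
  proof
    assume c: "p > 1/2 \<and> f 1 < p / (2*p - 1)
                 \<and> (\<forall>i\<in>{1..k}. f (real i / real k) \<le> f ((real i - 1) / real k))
                 \<and> (\<exists>i\<in>{1..k}. f (real i / real k) < f ((real i - 1) / real k))"
    then have "f (real (Suc j) / real k) \<le> f (real j / real k)" using i rj by metis
    moreover have "2 * p - 1 \<ge> 0" using c by simp
    ultimately have "(2 * p - 1) * f (real (Suc j) / real k) \<le> (2 * p - 1) * f (real j / real k)"
      by (rule mult_left_mono)
    then show ?thesis unfolding e mins by simp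
  next
    assume c: "p < 1/2 \<and> f 0 < (1 - p) / (1 - 2*p)
                 \<and> (\<forall>i\<in>{1..k}. f (real i / real k) \<ge> f ((real i - 1) / real k))
                 \<and> (\<exists>i\<in>{1..k}. f (real i / real k) > f ((real i - 1) / real k))"
    then have "f (real (Suc j) / real k) \<ge> f (real j / real k)" using i rj by metis
    moreover have "2 * p - 1 \<le> 0" using c by simp
    ultimately have "(2 * p - 1) * f (real (Suc j) / real k) \<le> (2 * p - 1) * f (real j / real k)"
      by (rule mult_left_mono_neg)
    then show ?thesis unfolding e mins by simp
  qed
qed

lemma Yc_Suc: "Yc x (Suc n) = Yc x n + xi x (Suc n)"
proof -
  have "{j\<in>{1..Suc n}. x j = 1} = (if x (Suc n) = 1 then insert (Suc n) {j\<in>{1..n}. x j = 1} else {j\<in>{1..n}. x j = 1})"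
    by (cases "x (Suc n) = 1") (auto simp: le_Suc_eq)
  then show ?thesis unfolding Yc_def xi_def by simp
qed

lemma Yc_rec: "Yc x (Suc N) = xi x 1 + Tf x N + (\<Sum>m\<in>{1..N}. H (Yc x m / real m))"
proof (induction N)
  case 0
  have "{j\<in>{1..Suc 0}. x j = 1} = (if x 1 = 1 then {1} else {})" by auto
  then show ?case unfolding Yc_def xi_def Tf_def by simp
next
  case (Suc N)
  show ?case using Suc unfolding Yc_Suc[of x "Suc N"] Tf_Suc by (simp add: Df_def)
qed

lemma S_eq:
  assumes "\<omega> \<in> space M"
  shows "real_of_int (erw_S X n \<omega>) = 2 * Yc (Xw \<omega>) n - real n"
proof (induction n)
  case 0 then show ?case by (simp add: erw_S_def Yc_def)
next
  case (Suc n)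
  have "erw_S X (Suc n) \<omega> = erw_S X n \<omega> + X (Suc n) \<omega>" unfolding erw_S_def by simp
  moreover have "X (Suc n) \<omega> \<in> {-1, 1}" by (rule X_vals) (use assms in auto)
  ultimately show ?case using Suc unfolding Yc_Suc by (auto simp: xi_def Xw_def)
qed

lemma final:
  assumes cond: "(p > 1/2 \<and> f 1 < p / (2*p - 1)
                 \<and> (\<forall>i\<in>{1..k}. f (real i / real k) \<le> f ((real i - 1) / real k))
                 \<and> (\<exists>i\<in>{1..k}. f (real i / real k) < f ((real i - 1) / real k)))
             \<or> (p < 1/2 \<and> f 0 < (1 - p) / (1 - 2*p)
                 \<and> (\<forall>i\<in>{1..k}. f (real i / real k) \<ge> f ((real i - 1) / real k))
                 \<and> (\<exists>i\<in>{1..k}. f (real i / real k) > f ((real i - 1) / real k)))"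
  shows "\<exists>x\<in>{-1<..<1}. AE \<omega> in M.
           (\<lambda>n. real_of_int (erw_S X n \<omega>) / real n) \<longlonglongrightarrow> x"
proof -
  have Hmono: "\<forall>a\<in>{0..1}. \<forall>b\<in>{0..1}. a \<le> b \<longrightarrow> H b \<le> H a"
    unfolding H_def using bern_antimono[of cc] cc_mono[OF cond] by auto
  have H01: "\<forall>a\<in>{0..1}. H a \<in> {0..1}" using H_range by auto
  have H0: "H 0 > 0" unfolding H_def bern_0 using cc_strict by simp
  have H1: "H 1 < 1" unfolding H_def bern_1 using cc_strict by simp
  have "\<exists>y. 0 \<le> y \<and> y \<le> 1 \<and> (\<lambda>y. y - H y) y = 0"
  proof (rule IVT')
    show "(\<lambda>y. y - H y) 0 \<le> 0" using H0 by simp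
    show "0 \<le> (\<lambda>y. y - H y) 1" using H1 by simp
    show "continuous_on {0..1} (\<lambda>y. y - H y)"
      unfolding H_def by (intro continuous_intros bern_cont)
  qed simp
  then obtain ys where ys: "0 \<le> ys" "ys \<le> 1" "H ys = ys" by auto
  have ys0: "ys \<noteq> 0" using ys H0 by auto
  have ys1: "ys \<noteq> 1" using ys H1 by auto
  have conv: "(\<lambda>n. real_of_int (erw_S X n \<omega>) / real n) \<longlonglongrightarrow> 2 * ys - 1"
    if w: "\<omega> \<in> space M" and T: "(\<lambda>N. Tf (Xw \<omega>) N / real N) \<longlonglongrightarrow> 0" for \<omega>
  proof -
    define y where "y n = Yc (Xw \<omega>) n / real n" for n
    define r where "r N = (xi (Xw \<omega>) 1 + Tf (Xw \<omega>) N) / (real N + 1)" for N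
    have r: "r \<longlonglongrightarrow> 0"
    proof -
      have a: "(\<lambda>N. xi (Xw \<omega>) 1 * (1 / (real N + 1))) \<longlonglongrightarrow> xi (Xw \<omega>) 1 * 0"
        by (intro tendsto_mult tendsto_const)
           (use LIMSEQ_inverse_real_of_nat in \<open>simp add: inverse_eq_divide add.commute\<close>)
      have b: "(\<lambda>N. Tf (Xw \<omega>) N / real N * (real N / real (Suc N))) \<longlonglongrightarrow> 0 * 1"
        by (intro tendsto_mult T LIMSEQ_n_over_Suc_n)
      have eq: "r N = xi (Xw \<omega>) 1 * (1 / (real N + 1)) + Tf (Xw \<omega>) N / real N * (real N / real (Suc N))" for N
      proof (cases "N = 0")
        case True then show ?thesis by (simp add: r_def Tf_def)
      next
        case False
        have "Tf (Xw \<omega>) N / real N * (real N / real (Suc N)) = Tf (Xw \<omega>) N / (real N + 1)"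
          using False by (simp add: add.commute)
        then show ?thesis unfolding r_def by (simp add: add_divide_distrib)
      qed
      show ?thesis unfolding eq using tendsto_add[OF a b] by simp
    qed
    have rec: "\<forall>N\<ge>1. y (Suc N) = (\<Sum>m=1..N. H (y m)) / (real N + 1) + r N"
    proof (intro allI impI)
      fix N :: nat assume "N \<ge> 1"
      have "y (Suc N) = (xi (Xw \<omega>) 1 + Tf (Xw \<omega>) N + (\<Sum>m\<in>{1..N}. H (Yc (Xw \<omega>) m / real m))) / (real N + 1)"
        unfolding y_def Yc_rec by (simp add: add.commute)
      then show "y (Suc N) = (\<Sum>m=1..N. H (y m)) / (real N + 1) + r N"
        unfolding r_def y_def by (simp add: add_divide_distrib algebra_simps)
    qed
    have y01: "\<forall>n\<ge>1. y n \<in> {0..1}" unfolding y_def using Yc_range by auto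
    have yc: "y \<longlonglongrightarrow> ys" by (rule det_conv[OF y01 Hmono H01 _ _ r rec]) (use ys in auto)
    have "(\<lambda>n. 2 * y n - 1) \<longlonglongrightarrow> 2 * ys - 1" by (intro tendsto_intros yc)
    moreover have "eventually (\<lambda>n. 2 * y n - 1 = real_of_int (erw_S X n \<omega>) / real n) sequentially"
      using eventually_ge_at_top[of "1::nat"]
      by eventually_elim (simp add: S_eq[OF w] y_def field_simps)
    ultimately show ?thesis by (rule Lim_transform_eventually)
  qed
  show ?thesis
  proof (rule bexI[of _ "2 * ys - 1"])
    show "AE \<omega> in M. (\<lambda>n. real_of_int (erw_S X n \<omega>) / real n) \<longlonglongrightarrow> 2 * ys - 1"
      using SLLN by (rule AE_mp) (auto intro!: AE_I2 conv)
    show "2 * ys - 1 \<in> {-1<..<1}" using ys ys0 ys1 by auto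
  qed
qed

end

theorem proposition4p2:
  fixes M :: "'a measure"
    and q p :: real and k :: nat and f :: "real \<Rightarrow> real"
    and X :: "nat \<Rightarrow> 'a \<Rightarrow> int"
    and U :: "nat \<Rightarrow> nat \<Rightarrow> 'a \<Rightarrow> nat"
    and V :: "nat \<Rightarrow> 'a \<Rightarrow> real"
  assumes q: "0 \<le> q" "q \<le> 1"
    and p: "0 < p" "p < 1" "p \<noteq> 1/2"
    and k: "1 \<le> k"
    and f_range: "\<forall>x\<in>{0..1}. f x \<in> {0..1}"
    and M: "prob_space M"
    and indep: "prob_space.indep_vars M (\<lambda>_. borel) (erw_noise (X 1) U V) (erw_index_set k)"
    and X0: "\<forall>\<omega>\<in>space M. X 0 \<omega> = 0"
    and X1_vals: "\<forall>\<omega>\<in>space M. X 1 \<omega> \<in> {-1, 1}"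
    and X1_prob: "measure M {\<omega>\<in>space M. X 1 \<omega> = 1} = q"
    and U_vals: "\<forall>n\<ge>1. \<forall>i\<in>{1..k}. \<forall>\<omega>\<in>space M. U n i \<omega> \<in> {1..n}"
    and U_unif: "\<forall>n\<ge>1. \<forall>i\<in>{1..k}. \<forall>j\<in>{1..n}.
                   measure M {\<omega>\<in>space M. U n i \<omega> = j} = 1 / real n"
    and V_unif: "\<forall>n\<ge>1. distr M lborel (V n) = uniform_measure lborel {0..1}"
    and X_step: "\<forall>n\<ge>1. \<forall>\<omega>\<in>space M. X (Suc n) \<omega> =
        (let c = real (erw_count k X U n \<omega>) / real k in
         if V n \<omega> \<le> p * f c + (1 - p) * (1 - f c) then 1 else -1)"
    and cond: "(p > 1/2 \<and> f 1 < p / (2*p - 1)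
                 \<and> (\<forall>i\<in>{1..k}. f (real i / real k) \<le> f ((real i - 1) / real k))
                 \<and> (\<exists>i\<in>{1..k}. f (real i / real k) < f ((real i - 1) / real k)))
             \<or> (p < 1/2 \<and> f 0 < (1 - p) / (1 - 2*p)
                 \<and> (\<forall>i\<in>{1..k}. f (real i / real k) \<ge> f ((real i - 1) / real k))
                 \<and> (\<exists>i\<in>{1..k}. f (real i / real k) > f ((real i - 1) / real k)))"
  shows "\<exists>x\<in>{-1<..<1}. AE \<omega> in M.
           (\<lambda>n. real_of_int (erw_S X n \<omega>) / real n) \<longlonglongrightarrow> x"
proof -
  interpret erw M q p k f X U V
    by (rule erw.intro[OF p k f_range M indep X1_vals U_vals U_unif V_unif X_step])
  show ?thesis by (rule final[OF cond])
qed

end
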